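(* Let $b\in L^1_{loc}(\mathbf{R}^n\times\mathbf{R})$ be a vector field. There is a constant $C$ depending only on $n$ such that for all $x,y\in\mathbf{R}^n$ and $t>0$, \[ \int_0^t\!\!\int_{\mathbf{R}^n}\frac{1}{(|x-z|+\sqrt{t-\tau})^{n+1}}\cdot\frac{|b(z,\tau)|}{(|z-y|+\sqrt{\tau})^{n+1}}\,dz\,d\tau\le C\,B(b,0,t)\,K_1(x,t;y,0). \]
   Context: $K_1(x,t;y,s)=\dfrac{1}{(|x-y|+\sqrt{t-s})^{n+1}}$ for $t\ge s$ (with $(x,t)\neq(y,s)$), and $K_1(x,t;y,s)=0$ for $s>t$. For $l<t$, \[ B(b,l,t)=\sup_{x\in\mathbf{R}^n}\int_l^t\!\!\int_{\mathbf{R}^n}\big[K_1(x,t;y,s)+K_1(x,s;y,l)\big]\,|b(y,s)|\,dy\,ds . \] *)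

theory Defs
  imports "HOL-Analysis.Analysis"
begin

text \<open>At the diagonal (x,t) = (y,s) the formula has denominator 0, and Isabelle's
  division convention yields 0 there (a null set, irrelevant for all integrals).\<close>
definition K1 :: "'a::euclidean_space \<Rightarrow> real \<Rightarrow> 'a \<Rightarrow> real \<Rightarrow> real" where
  "K1 x t y s = (if s \<le> t then 1 / (norm (x - y) + sqrt (t - s)) ^ (DIM('a) + 1) else 0)"

definition locally_integrable :: "('a::euclidean_space \<times> real \<Rightarrow> 'b::euclidean_space) \<Rightarrow> bool" where
  "locally_integrable b \<longleftrightarrow> (\<forall>K. compact K \<longrightarrow> set_integrable lborel K b)"

definition Bnorm :: "('a::euclidean_space \<times> real \<Rightarrow> 'b::euclidean_space) \<Rightarrow> real \<Rightarrow> real \<Rightarrow> ennreal" where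
  "Bnorm b l t = (SUP x. \<integral>\<^sup>+ s \<in> {l..t}. (\<integral>\<^sup>+ y. ennreal ((K1 x t y s + K1 x s y l) * norm (b (y, s))) \<partial>lborel) \<partial>lborel)"

end

theory Submission
  imports Defs
begin
lemma b_meas:
  fixes b :: "'a::euclidean_space \<times> real \<Rightarrow> 'b::euclidean_space"
  assumes "locally_integrable b"
  shows "b \<in> borel_measurable lborel"
proof (rule borel_measurable_LIMSEQ_metric)
  fix i :: nat
  have "set_integrable lborel (cball 0 (real i)) b"
    using assms unfolding locally_integrable_def by auto
  then show "(\<lambda>p. indicator (cball 0 (real i)) p *\<^sub>R b p) \<in> borel_measurable lborel"
    unfolding set_integrable_def by (rule borel_measurable_integrable)
next
  fix p :: "'a \<times> real"
  obtain N :: nat where N: "norm p \<le> real N" using real_arch_simple by blast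
  have "\<forall>\<^sub>F i in sequentially. indicator (cball 0 (real i)) p *\<^sub>R b p = b p"
    using eventually_ge_at_top[of N]
    by eventually_elim (use N in \<open>auto simp: indicator_def\<close>)
  then show "(\<lambda>i. indicator (cball 0 (real i)) p *\<^sub>R b p) \<longlonglongrightarrow> b p"
    by (rule tendsto_eventually)
qed

lemma K1_meas[measurable]:
  "(\<lambda>p. K1 w (f p) (g p) (h p)) \<in> borel_measurable M" if [measurable]: "f \<in> borel_measurable M" "g \<in> borel_measurable M" "h \<in> borel_measurable M"
  for w :: "'a::euclidean_space"
  unfolding K1_def by measurable

lemma K1_meas2[measurable]:
  "(\<lambda>p. K1 (f p) (g p) w (h p)) \<in> borel_measurable M" if [measurable]: "f \<in> borel_measurable M" "g \<in> borel_measurable M" "h \<in> borel_measurable M"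
  for w :: "'a::euclidean_space"
  unfolding K1_def by measurable

lemma key:
  fixes A B D c :: real and m :: nat
  assumes "A \<ge> 0" "B \<ge> 0" "D > 0" "A + B \<ge> D" "c \<ge> 0" "m > 0"
  shows "1 / A ^ m * c / B ^ m \<le> (2 ^ m * (1 / D ^ m)) * ((1 / A ^ m + 1 / B ^ m) * c)"
proof (cases "A = 0 \<or> B = 0")
  case True
  then show ?thesis using assms by (auto simp: zero_power intro!: mult_nonneg_nonneg add_nonneg_nonneg divide_nonneg_nonneg)
next
  case False
  then have A: "A > 0" and B: "B > 0" using assms by auto
  have e: "2 ^ m * (1 / D ^ m) = 1 / (D/2) ^ m" by (simp add: power_divide)
  show ?thesis
  proof (cases "A \<ge> D/2")
    case True
    have "1 / A ^ m \<le> 1 / (D/2) ^ m"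
      using True assms by (intro divide_left_mono power_mono mult_pos_pos) auto
    then have "1 / A ^ m * (c / B ^ m) \<le> 1 / (D/2) ^ m * (c / B ^ m)"
      using assms B by (intro mult_right_mono) auto
    also have "\<dots> \<le> 1 / (D/2) ^ m * ((1 / A ^ m + 1 / B ^ m) * c)"
      using assms A B by (intro mult_left_mono) (auto simp: field_simps)
    finally have "1 / A ^ m * (c / B ^ m) \<le> 1 / (D/2) ^ m * ((1 / A ^ m + 1 / B ^ m) * c)" .
    moreover have "1 / A ^ m * c / B ^ m = 1 / A ^ m * (c / B ^ m)" by simp
    ultimately show ?thesis unfolding e by simp
  next
    case False
    then have BD: "B \<ge> D/2" using assms by auto
    have "1 / B ^ m \<le> 1 / (D/2) ^ m"
      using BD assms by (intro divide_left_mono power_mono mult_pos_pos) auto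
    then have "1 / B ^ m * (c / A ^ m) \<le> 1 / (D/2) ^ m * (c / A ^ m)"
      using assms A by (intro mult_right_mono) auto
    also have "\<dots> \<le> 1 / (D/2) ^ m * ((1 / A ^ m + 1 / B ^ m) * c)"
      using assms A B by (intro mult_left_mono) (auto simp: field_simps)
    finally have "1 / B ^ m * (c / A ^ m) \<le> 1 / (D/2) ^ m * ((1 / A ^ m + 1 / B ^ m) * c)" .
    moreover have "1 / A ^ m * c / B ^ m = 1 / B ^ m * (c / A ^ m)" by simp
    ultimately show ?thesis unfolding e by (simp add: mult.commute)
  qed
qed

theorem lemma3p1:
  shows "\<exists>C::real. \<forall>(b :: 'a::euclidean_space \<times> real \<Rightarrow> 'a). locally_integrable b \<longrightarrow>
     (\<forall>x y t. t > 0 \<longrightarrow>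
        (\<integral>\<^sup>+ \<tau> \<in> {0..t}. (\<integral>\<^sup>+ z. ennreal (1 / (norm (x - z) + sqrt (t - \<tau>)) ^ (DIM('a) + 1)
              * norm (b (z, \<tau>)) / (norm (z - y) + sqrt \<tau>) ^ (DIM('a) + 1)) \<partial>lborel) \<partial>lborel)
        \<le> ennreal C * Bnorm b 0 t * ennreal (K1 x t y 0))"
proof (intro exI[of _ "2 ^ (DIM('a) + 2)"] allI impI)
  fix b :: "'a \<times> real \<Rightarrow> 'a" and x y :: 'a and t :: real
  assume li: "locally_integrable b" and t: "t > 0"
  have bm: "b \<in> borel_measurable lborel" by (rule b_meas[OF li])
  have bm2[measurable]: "b \<in> borel_measurable (lborel \<Otimes>\<^sub>M lborel)"
    using bm by (simp add: lborel_prod)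
  define h where "h w \<tau> z = (K1 w t z \<tau> + K1 w \<tau> z 0) * norm (b (z, \<tau>))" for w \<tau> z
  have hm[measurable]: "(\<lambda>(\<tau>, z). h w \<tau> z) \<in> borel_measurable (lborel \<Otimes>\<^sub>M (lborel :: 'a measure))" for w
    unfolding h_def by measurable
  have hz[measurable]: "(\<lambda>z. h w \<tau> z) \<in> borel_measurable lborel" for w \<tau>
    unfolding h_def by measurable
  have Im[measurable]: "(\<lambda>\<tau>. \<integral>\<^sup>+z. ennreal (h w \<tau> z) \<partial>lborel) \<in> borel_measurable lborel" for w
    by measurable
  have IB: "(\<integral>\<^sup>+\<tau>\<in>{0..t}. (\<integral>\<^sup>+z. ennreal (h w \<tau> z) \<partial>lborel) \<partial>lborel) \<le> Bnorm b 0 t" for w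
    unfolding Bnorm_def h_def by (rule SUP_upper) simp
  let ?m = "DIM('a) + 1"
  define M where "M = 2 ^ ?m * K1 x t y 0"
  have M0: "M \<ge> 0" unfolding M_def K1_def by simp
  have pw: "1 / (norm (x - z) + sqrt (t - \<tau>)) ^ ?m * norm (b (z, \<tau>)) / (norm (z - y) + sqrt \<tau>) ^ ?m
      \<le> M * (h x \<tau> z + h y \<tau> z)" if "\<tau> \<in> {0..t}" for \<tau> z
  proof -
    have tau: "0 \<le> \<tau>" "\<tau> \<le> t" using that by auto
    have Dpos: "0 < norm (x - y) + sqrt t" using t by (simp add: add_nonneg_pos)
    have tri: "norm (x - y) \<le> norm (x - z) + norm (z - y)"
      by (rule norm_diff_triangle_le) auto
    have "sqrt t \<le> sqrt (t - \<tau>) + sqrt \<tau>"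
      using sqrt_add_le_add_sqrt[of "t - \<tau>" \<tau>] tau by simp
    then have sum: "norm (x - z) + sqrt (t - \<tau>) + (norm (z - y) + sqrt \<tau>) \<ge> norm (x - y) + sqrt t"
      using tri by linarith
    have k: "1 / (norm (x - z) + sqrt (t - \<tau>)) ^ ?m * norm (b (z, \<tau>)) / (norm (z - y) + sqrt \<tau>) ^ ?m
      \<le> (2 ^ ?m * (1 / (norm (x - y) + sqrt t) ^ ?m)) *
         ((1 / (norm (x - z) + sqrt (t - \<tau>)) ^ ?m + 1 / (norm (z - y) + sqrt \<tau>) ^ ?m) * norm (b (z, \<tau>)))"
      by (rule key) (use sum t tau Dpos in auto)
    have e1: "2 ^ ?m * (1 / (norm (x - y) + sqrt t) ^ ?m) = M"
      unfolding M_def K1_def using t by simp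
    have K1a: "K1 x t z \<tau> = 1 / (norm (x - z) + sqrt (t - \<tau>)) ^ ?m" using tau by (simp add: K1_def)
    have K1b: "K1 y \<tau> z 0 = 1 / (norm (z - y) + sqrt \<tau>) ^ ?m" using tau by (simp add: K1_def norm_minus_commute)
    have K0: "K1 x \<tau> z 0 \<ge> 0" "K1 y t z \<tau> \<ge> 0" by (auto simp: K1_def)
    have hh: "(1 / (norm (x - z) + sqrt (t - \<tau>)) ^ ?m + 1 / (norm (z - y) + sqrt \<tau>) ^ ?m) * norm (b (z, \<tau>))
       \<le> h x \<tau> z + h y \<tau> z"
      unfolding h_def K1a[symmetric] K1b[symmetric] using K0
      by (simp add: algebra_simps add_increasing2 add_increasing mult_nonneg_nonneg)
    have k': "1 / (norm (x - z) + sqrt (t - \<tau>)) ^ ?m * norm (b (z, \<tau>)) / (norm (z - y) + sqrt \<tau>) ^ ?m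
      \<le> M * ((1 / (norm (x - z) + sqrt (t - \<tau>)) ^ ?m + 1 / (norm (z - y) + sqrt \<tau>) ^ ?m) * norm (b (z, \<tau>)))"
      using k unfolding e1 .
    show ?thesis by (rule order_trans[OF k' mult_left_mono[OF hh M0]])
  qed
  have step1: "(\<integral>\<^sup>+ z. ennreal (1 / (norm (x - z) + sqrt (t - \<tau>)) ^ ?m
              * norm (b (z, \<tau>)) / (norm (z - y) + sqrt \<tau>) ^ ?m) \<partial>lborel)
     \<le> ennreal M * (\<integral>\<^sup>+z. ennreal (h x \<tau> z) \<partial>lborel) + ennreal M * (\<integral>\<^sup>+z. ennreal (h y \<tau> z) \<partial>lborel)"
    if "\<tau> \<in> {0..t}" for \<tau>
  proof -
    have h0: "h w \<tau> z \<ge> 0" for w z unfolding h_def K1_def by auto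
    have "(\<integral>\<^sup>+ z. ennreal (1 / (norm (x - z) + sqrt (t - \<tau>)) ^ ?m
              * norm (b (z, \<tau>)) / (norm (z - y) + sqrt \<tau>) ^ ?m) \<partial>lborel)
        \<le> (\<integral>\<^sup>+ z. ennreal M * ennreal (h x \<tau> z) + ennreal M * ennreal (h y \<tau> z) \<partial>lborel)"
    proof (rule nn_integral_mono)
      fix z
      have "ennreal (1 / (norm (x - z) + sqrt (t - \<tau>)) ^ ?m
              * norm (b (z, \<tau>)) / (norm (z - y) + sqrt \<tau>) ^ ?m) \<le> ennreal (M * (h x \<tau> z + h y \<tau> z))"
        using pw[OF that] by (rule ennreal_leI)
      also have "\<dots> = ennreal M * ennreal (h x \<tau> z) + ennreal M * ennreal (h y \<tau> z)"
        using M0 h0[of x z] h0[of y z] by (simp add: ennreal_mult distrib_left ennreal_plus)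
      finally show "ennreal (1 / (norm (x - z) + sqrt (t - \<tau>)) ^ ?m
              * norm (b (z, \<tau>)) / (norm (z - y) + sqrt \<tau>) ^ ?m)
          \<le> ennreal M * ennreal (h x \<tau> z) + ennreal M * ennreal (h y \<tau> z)" .
    qed
    also have "\<dots> = ennreal M * (\<integral>\<^sup>+z. ennreal (h x \<tau> z) \<partial>lborel) + ennreal M * (\<integral>\<^sup>+z. ennreal (h y \<tau> z) \<partial>lborel)"
      by (simp add: nn_integral_add nn_integral_cmult)
    finally show ?thesis .
  qed
  let ?Ix = "\<lambda>\<tau>. \<integral>\<^sup>+z. ennreal (h x \<tau> z) \<partial>lborel"
  let ?Iy = "\<lambda>\<tau>. \<integral>\<^sup>+z. ennreal (h y \<tau> z) \<partial>lborel"
  have "(\<integral>\<^sup>+ \<tau> \<in> {0..t}. (\<integral>\<^sup>+ z. ennreal (1 / (norm (x - z) + sqrt (t - \<tau>)) ^ ?m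
              * norm (b (z, \<tau>)) / (norm (z - y) + sqrt \<tau>) ^ ?m) \<partial>lborel) \<partial>lborel)
      \<le> (\<integral>\<^sup>+ \<tau>. ennreal M * (?Ix \<tau> * indicator {0..t} \<tau>) + ennreal M * (?Iy \<tau> * indicator {0..t} \<tau>) \<partial>lborel)"
  proof (rule nn_integral_mono)
    fix \<tau>
    show "(\<integral>\<^sup>+ z. ennreal (1 / (norm (x - z) + sqrt (t - \<tau>)) ^ ?m
              * norm (b (z, \<tau>)) / (norm (z - y) + sqrt \<tau>) ^ ?m) \<partial>lborel) * indicator {0..t} \<tau>
        \<le> ennreal M * (?Ix \<tau> * indicator {0..t} \<tau>) + ennreal M * (?Iy \<tau> * indicator {0..t} \<tau>)"
      using step1[of \<tau>] by (cases "\<tau> \<in> {0..t}") auto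
  qed
  also have "\<dots> = ennreal M * (\<integral>\<^sup>+\<tau>\<in>{0..t}. ?Ix \<tau> \<partial>lborel) + ennreal M * (\<integral>\<^sup>+\<tau>\<in>{0..t}. ?Iy \<tau> \<partial>lborel)"
    by (simp add: nn_integral_add nn_integral_cmult)
  also have "\<dots> \<le> ennreal M * Bnorm b 0 t + ennreal M * Bnorm b 0 t"
    by (intro add_mono mult_left_mono IB) auto
  also have "\<dots> = ennreal (2 ^ (DIM('a) + 2)) * Bnorm b 0 t * ennreal (K1 x t y 0)"
  proof -
    have "K1 x t y 0 \<ge> 0" unfolding K1_def by simp
    then have "ennreal M = ennreal (2 ^ ?m) * ennreal (K1 x t y 0)"
      unfolding M_def by (simp add: ennreal_mult)
    moreover have "ennreal (2 ^ (DIM('a) + 2)) = 2 * ennreal (2 ^ ?m)"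
    proof -
      have "ennreal (2 ^ (DIM('a) + 2)) = ennreal (2 * 2 ^ ?m)" by simp
      also have "\<dots> = ennreal 2 * ennreal (2 ^ ?m)" by (rule ennreal_mult) auto
      finally show ?thesis by simp
    qed
    ultimately show ?thesis unfolding mult_2[symmetric] by (simp only: ac_simps)
  qed
  finally show "(\<integral>\<^sup>+ \<tau> \<in> {0..t}. (\<integral>\<^sup>+ z. ennreal (1 / (norm (x - z) + sqrt (t - \<tau>)) ^ (DIM('a) + 1)
              * norm (b (z, \<tau>)) / (norm (z - y) + sqrt \<tau>) ^ (DIM('a) + 1)) \<partial>lborel) \<partial>lborel)
        \<le> ennreal (2 ^ (DIM('a) + 2)) * Bnorm b 0 t * ennreal (K1 x t y 0)" .
qed

end
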